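(* Let $\mathcal X\subset\mathbb R^p$ be a finite set (with Euclidean distance $d$) having a convex-nice clustering $\mathcal C=\{C_1,\ldots,C_k\}$, and let $\beta=\min_i|C_i|/|\mathcal X|$. Let $\ell$ be an integer with $k\le\ell\le|\mathcal X|$. If the points of $\mathcal X$ are presented in a uniformly random order, then with probability at least $1-ke^{-\beta\ell}$, the final centers of sequential $\ell$-means induce a clustering of $\mathcal X$ that is a refinement of $\mathcal C$.
   Context: A clustering of $\mathcal X$ is a set of nonempty, pairwise disjoint subsets whose union is $\mathcal X$. A clustering $\mathcal C=\{C_1,\ldots,C_k\}$ is convex-nice if for any $i\ne j$, any points $x,y$ in the convex hull of $C_i$ and any point $z$ in the convex hull of $C_j$, $d(y,x)<d(z,x)$. A list $T=(t_1,\ldots,t_m)$ induces the clustering of $\mathcal X$ assigning each $x$ to the index $i$ minimizing $\|x-t_i\|$ (ties broken by smallest $i$), empty clusters discarded. $\mathcal C$ is a refinement of $\mathcal C'$ if $x\sim_{\mathcal C}y$ implies $x\sim_{\mathcal C'}y$, where $x\sim_{\mathcal C}y$ means $x,y$ lie in the same cluster of $\mathcal C$. Sequential $\ell$-means on input sequence $x_1,\ldots,x_N$: set $t_i=x_i$ and $n_i=1$ for $i=1,\ldots,\ell$; then for each subsequent point $x$: let $i$ be the index of the closest center to $x$ (ties by smallest index), increment $n_i$, and replace $t_i$ by $t_i+(1/n_i)(x-t_i)$. Output the final $(t_1,\ldots,t_\ell)$. *)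

theory Defs
  imports "HOL-Probability.Probability" "HOL-Combinatorics.Multiset_Permutations"
begin

definition is_clustering :: "'a set \<Rightarrow> 'a set set \<Rightarrow> bool" where
  "is_clustering X C \<longleftrightarrow> (\<forall>A\<in>C. A \<noteq> {}) \<and>
     (\<forall>A\<in>C. \<forall>B\<in>C. A \<noteq> B \<longrightarrow> A \<inter> B = {}) \<and> \<Union>C = X"

definition convex_nice :: "'a::euclidean_space set set \<Rightarrow> bool" where
  "convex_nice C \<longleftrightarrow> (\<forall>Ci\<in>C. \<forall>Cj\<in>C. Ci \<noteq> Cj \<longrightarrow>
     (\<forall>x\<in>convex hull Ci. \<forall>y\<in>convex hull Ci. \<forall>z\<in>convex hull Cj. dist y x < dist z x))"

definition same_cluster :: "'a set set \<Rightarrow> 'a \<Rightarrow> 'a \<Rightarrow> bool" where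
  "same_cluster C x y \<longleftrightarrow> (\<exists>A\<in>C. x \<in> A \<and> y \<in> A)"

definition refines :: "'a set set \<Rightarrow> 'a set set \<Rightarrow> bool" where
  "refines C C' \<longleftrightarrow> (\<forall>x y. same_cluster C x y \<longrightarrow> same_cluster C' x y)"

definition closest_idx :: "'a::euclidean_space list \<Rightarrow> 'a \<Rightarrow> nat" where
  "closest_idx T x = (LEAST i. i < length T \<and>
      (\<forall>j<length T. norm (x - T ! i) \<le> norm (x - T ! j)))"

definition induced_clustering :: "'a::euclidean_space list \<Rightarrow> 'a set \<Rightarrow> 'a set set" where
  "induced_clustering T X =
     {A. A \<noteq> {} \<and> (\<exists>i<length T. A = {x\<in>X. closest_idx T x = i})}"

text \<open>One step of sequential means: state = (centers, counts).\<close>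
definition seq_step :: "'a::euclidean_space list \<times> nat list \<Rightarrow> 'a \<Rightarrow> 'a list \<times> nat list" where
  "seq_step s x = (let T = fst s; n = snd s; i = closest_idx T x; m = n ! i + 1 in
     (T[i := T ! i + (1 / real m) *\<^sub>R (x - T ! i)], n[i := m]))"

definition seq_means :: "nat \<Rightarrow> 'a::euclidean_space list \<Rightarrow> 'a list" where
  "seq_means l xs = fst (foldl seq_step (take l xs, replicate l 1) (drop l xs))"

end

theory Submission
  imports Defs
begin

lemma perm_bad_split:
  assumes "finite X" "X \<noteq> {}"
  shows "permutations_of_set X \<inter> {xs. set (take (Suc l) xs) \<inter> A = {}} =
    (\<Union>x\<in>X-A. (\<lambda>xs. x # xs) ` (permutations_of_set (X-{x}) \<inter> {xs. set (take l xs) \<inter> A = {}}))"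
  apply (subst permutations_of_set_nonempty[OF assms(2)])
  by auto

lemma card_bad:
  assumes "finite X" "A \<subseteq> X" "l \<le> card X"
  shows "real (card (permutations_of_set X \<inter> {xs. set (take l xs) \<inter> A = {}}))
     \<le> (1 - real (card A) / real (card X)) ^ l * fact (card X)"
  using assms
proof (induction l arbitrary: X)
  case 0
  then show ?case by (simp add: card_mono)
next
  case (Suc l)
  define n where "n = card X"
  define a where "a = card A"
  have ne: "X \<noteq> {}" using Suc by auto
  have n1: "n \<ge> 1" using Suc.prems(3) n_def by auto
  have fA: "finite A" using Suc.prems finite_subset by auto
  have an: "a \<le> n" unfolding a_def n_def using Suc.prems card_mono by auto
  let ?r = "(1 - real a / real (n - 1)) ^ l * fact (n - 1)"
  have each: "real (card (permutations_of_set (X-{x}) \<inter> {xs. set (take l xs) \<inter> A = {}})) \<le> ?r"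
    if x: "x \<in> X - A" for x
  proof -
    have c: "card (X - {x}) = n - 1" using x Suc.prems n_def by auto
    have "A \<subseteq> X - {x}" "l \<le> card (X - {x})" using x Suc.prems c n_def by auto
    then show ?thesis using Suc.IH[of "X - {x}"] Suc.prems c a_def by auto
  qed
  have "card (permutations_of_set X \<inter> {xs. set (take (Suc l) xs) \<inter> A = {}}) =
     (\<Sum>x\<in>X-A. card ((\<lambda>xs. x # xs) ` (permutations_of_set (X-{x}) \<inter> {xs. set (take l xs) \<inter> A = {}})))"
    unfolding perm_bad_split[OF Suc.prems(1) ne]
    by (rule card_UN_disjoint) (use Suc.prems in auto)
  also have "\<dots> = (\<Sum>x\<in>X-A. card (permutations_of_set (X-{x}) \<inter> {xs. set (take l xs) \<inter> A = {}}))"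
    by (rule sum.cong) (auto simp: card_image)
  finally have "real (card (permutations_of_set X \<inter> {xs. set (take (Suc l) xs) \<inter> A = {}}))
      = (\<Sum>x\<in>X-A. real (card (permutations_of_set (X-{x}) \<inter> {xs. set (take l xs) \<inter> A = {}})))"
    by simp
  also have "\<dots> \<le> (\<Sum>x\<in>X-A. ?r)" by (rule sum_mono) (rule each)
  also have "\<dots> = real (n - a) * ?r"
    using Suc.prems fA by (simp add: card_Diff_subset a_def n_def)
  also have "\<dots> \<le> real (n - a) * ((1 - real a / real n) ^ l * fact (n - 1))"
  proof (cases "a = n")
    case True then show ?thesis by simp
  next
    case False
    then have "a < n" using an by auto
    then have "a \<le> n - 1" by auto
    then have h0: "0 \<le> 1 - real a / real (n - 1)"
      by (cases "n - 1 = 0") (auto simp: divide_le_eq)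
    have "real a / real n \<le> real a / real (n - 1)"
    proof (cases "a = 0")
      case True then show ?thesis by simp
    next
      case False
      then have "n \<ge> 2" using \<open>a < n\<close> by auto
      then show ?thesis by (intro divide_left_mono) auto
    qed
    then have "(1 - real a / real (n - 1)) ^ l \<le> (1 - real a / real n) ^ l"
      using h0 by (intro power_mono) auto
    then show ?thesis by (intro mult_left_mono mult_right_mono) auto
  qed
  also have "\<dots> = (1 - real a / real n) ^ Suc l * fact n"
  proof -
    have "fact n = real n * fact (n - 1)" using n1 fact_reduce[of n] by simp
    then show ?thesis using n1 an by (simp add: field_simps of_nat_diff)
  qed
  finally show ?case by (simp add: a_def n_def)
qed

lemma hull_disj:
  assumes "convex_nice C" "A \<in> C" "B \<in> C" "t \<in> convex hull A" "t \<in> convex hull B"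
  shows "A = B"
proof (rule ccontr)
  assume "A \<noteq> B"
  have "\<forall>x\<in>convex hull A. \<forall>y\<in>convex hull A. \<forall>z\<in>convex hull B. dist y x < dist z x"
    using assms(1,2,3) \<open>A \<noteq> B\<close> unfolding convex_nice_def by blast
  then have "dist t t < dist t t" using assms(4,5) by blast
  then show False by simp
qed

lemma closest_props:
  assumes "length T > 0"
  shows "closest_idx T x < length T \<and>
    (\<forall>j<length T. norm (x - T ! closest_idx T x) \<le> norm (x - T ! j))"
proof -
  let ?f = "\<lambda>j. norm (x - T ! j)"
  define m where "m = Min (?f ` {..<length T})"
  have "m \<in> ?f ` {..<length T}" unfolding m_def using assms by (intro Min_in) auto
  then obtain i where i: "i < length T" "?f i = m" by auto
  have "\<forall>j<length T. ?f i \<le> ?f j" using i unfolding m_def by auto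
  then have ex: "\<exists>i. i < length T \<and> (\<forall>j<length T. ?f i \<le> ?f j)" using i by blast
  show ?thesis unfolding closest_idx_def by (rule LeastI_ex[OF ex])
qed

definition inv_T :: "'a::euclidean_space set set \<Rightarrow> 'a list \<Rightarrow> bool" where
  "inv_T C T \<longleftrightarrow> (\<forall>i<length T. \<exists>A\<in>C. T ! i \<in> convex hull A) \<and>
                 (\<forall>A\<in>C. \<exists>i<length T. T ! i \<in> convex hull A)"

lemma closest_in:
  assumes "convex_nice C" "inv_T C T" "x \<in> A" "A \<in> C"
  shows "closest_idx T x < length T \<and> T ! closest_idx T x \<in> convex hull A"
proof -
  obtain j where j: "j < length T" "T ! j \<in> convex hull A" using assms(2,4) unfolding inv_T_def by blast
  then have lp: "length T > 0" by auto
  note cp = closest_props[OF lp, of x]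
  let ?i = "closest_idx T x"
  have "\<forall>i<length T. \<exists>A\<in>C. T ! i \<in> convex hull A" using assms(2) unfolding inv_T_def by simp
  then obtain B where B: "B \<in> C" "T ! ?i \<in> convex hull B" using cp by blast
  have "B = A"
  proof (rule ccontr)
    assume "B \<noteq> A"
    have xA: "x \<in> convex hull A" using assms(3) by (rule hull_inc)
    have AB: "A \<noteq> B" using \<open>B \<noteq> A\<close> by (rule not_sym)
    have cn: "\<forall>Ci\<in>C. \<forall>Cj\<in>C. Ci \<noteq> Cj \<longrightarrow>
     (\<forall>x\<in>convex hull Ci. \<forall>y\<in>convex hull Ci. \<forall>z\<in>convex hull Cj. dist y x < dist z x)"
      using assms(1) unfolding convex_nice_def .
    have "dist (T ! j) x < dist (T ! ?i) x"
      using bspec[OF bspec[OF bspec[OF mp[OF bspec[OF bspec[OF cn assms(4)] B(1)] AB] xA] j(2)] B(2)] .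
    moreover have "norm (x - T ! ?i) \<le> norm (x - T ! j)" using cp j by blast
    moreover have "dist (T ! j) x = norm (x - T ! j)"
      by (rule trans[OF dist_norm norm_minus_commute])
    moreover have "dist (T ! ?i) x = norm (x - T ! ?i)"
      by (rule trans[OF dist_norm norm_minus_commute])
    ultimately show False by linarith
  qed
  then show ?thesis using B cp by auto
qed

lemma step_inv:
  assumes "convex_nice C" "is_clustering X C" "inv_T C T" "x \<in> X"
  shows "inv_T C (fst (seq_step (T, n) x)) \<and> length (fst (seq_step (T, n) x)) = length T
     \<and> length (snd (seq_step (T, n) x)) = length n"
proof -
  obtain A where A: "A \<in> C" "x \<in> A" using assms(2,4) unfolding is_clustering_def by blast
  let ?i = "closest_idx T x"
  note ci = closest_in[OF assms(1,3) A(2,1)]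
  define c where "c = 1 / real (n ! ?i + 1)"
  have c01: "0 \<le> c" "c \<le> 1" unfolding c_def by auto
  define t where "t = T ! ?i + c *\<^sub>R (x - T ! ?i)"
  have "t = (1 - c) *\<^sub>R (T ! ?i) + c *\<^sub>R x" unfolding t_def by (simp add: algebra_simps)
  moreover have "x \<in> convex hull A" using A(2) by (rule hull_inc)
  ultimately have tA: "t \<in> convex hull A"
    using ci c01 convexD_alt[OF convex_convex_hull, of "T ! ?i" A x c] by simp
  have eq: "fst (seq_step (T, n) x) = T[?i := t]"
    unfolding seq_step_def t_def c_def by (simp add: Let_def)
  have "inv_T C (T[?i := t])"
    unfolding inv_T_def
  proof (intro conjI allI impI ballI)
    fix k assume k: "k < length (T[?i := t])"
    show "\<exists>A\<in>C. T[?i := t] ! k \<in> convex hull A"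
    proof (cases "k = ?i")
      case True then show ?thesis using tA A k by auto
    next
      case False then show ?thesis using assms(3) k unfolding inv_T_def by auto
    qed
  next
    fix A' assume A': "A' \<in> C"
    obtain k where k: "k < length T" "T ! k \<in> convex hull A'" using assms(3) A' unfolding inv_T_def by blast
    show "\<exists>k<length (T[?i := t]). T[?i := t] ! k \<in> convex hull A'"
    proof (cases "k = ?i")
      case True
      then have "A' = A" using hull_disj[OF assms(1) A' A(1)] k ci by auto
      then show ?thesis using True tA ci by auto
    next
      case False then show ?thesis using k by auto
    qed
  qed
  then show ?thesis using eq by (simp add: seq_step_def Let_def)
qed

lemma fold_inv:
  assumes "convex_nice C" "is_clustering X C"
  shows "inv_T C T \<Longrightarrow> set ys \<subseteq> X \<Longrightarrow> inv_T C (fst (foldl seq_step (T, n) ys))"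
proof (induction ys arbitrary: T n)
  case Nil then show ?case by simp
next
  case (Cons y ys)
  obtain T' n' where e: "seq_step (T, n) y = (T', n')" by (cases "seq_step (T, n) y")
  have "inv_T C T'" using step_inv[OF assms Cons.prems(1), of y n] Cons.prems e by auto
  then show ?case using Cons.IH[of T' n'] Cons.prems e by simp
qed

lemma final_refines:
  assumes "convex_nice C" "is_clustering X C" "inv_T C T"
  shows "refines (induced_clustering T X) C"
  unfolding refines_def
proof (intro allI impI)
  fix x y assume "same_cluster (induced_clustering T X) x y"
  then obtain i where i: "x \<in> X" "y \<in> X" "closest_idx T x = i" "closest_idx T y = i"
    unfolding same_cluster_def induced_clustering_def by auto
  obtain A where A: "A \<in> C" "x \<in> A" using assms(2) i unfolding is_clustering_def by blast
  obtain B where B: "B \<in> C" "y \<in> B" using assms(2) i unfolding is_clustering_def by blast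
  have h1: "T ! i \<in> convex hull A" using closest_in[OF assms(1,3) A(2,1)] i(3) by simp
  have h2: "T ! i \<in> convex hull B" using closest_in[OF assms(1,3) B(2,1)] i(4) by simp
  have "A = B" using hull_disj[OF assms(1) A(1) B(1) h1 h2] .
  then show "same_cluster C x y" using A B unfolding same_cluster_def by auto
qed

lemma deterministic:
  assumes "convex_nice C" "is_clustering X C" "xs \<in> permutations_of_set X" "l \<le> card X"
    "\<forall>A\<in>C. set (take l xs) \<inter> A \<noteq> {}"
  shows "refines (induced_clustering (seq_means l xs) X) C"
proof -
  have sx: "set xs = X" "length xs = card X"
    using permutations_of_setD(1)[OF assms(3)] length_finite_permutations_of_set[OF assms(3)] by simp_all
  let ?T = "take l xs"
  have lT: "length ?T = l" using sx assms(4) by simp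
  have "inv_T C ?T" unfolding inv_T_def
  proof (intro conjI allI impI ballI)
    fix i assume "i < length ?T"
    then have "?T ! i \<in> set ?T" by (rule nth_mem)
    then have "?T ! i \<in> X" using sx(1) set_take_subset[of l xs] by (simp add: subset_iff)
    then obtain A where A: "A \<in> C" "?T ! i \<in> A" using assms(2) unfolding is_clustering_def by blast
    have "?T ! i \<in> convex hull A" using hull_inc[OF A(2)] .
    then show "\<exists>A\<in>C. ?T ! i \<in> convex hull A" using A(1) by blast
  next
    fix A assume "A \<in> C"
    then have "set ?T \<inter> A \<noteq> {}" using assms(5) by simp
    then obtain z where z: "z \<in> set ?T" "z \<in> A" by blast
    then obtain i where i: "i < length ?T" "?T ! i = z" by (auto simp: in_set_conv_nth)
    have "?T ! i \<in> convex hull A" using i(2) hull_inc[OF z(2)] by simp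
    then show "\<exists>i<length ?T. ?T ! i \<in> convex hull A" using i(1) by blast
  qed
  moreover have "set (drop l xs) \<subseteq> X" using sx(1) set_drop_subset[of l xs] by simp
  ultimately have "inv_T C (seq_means l xs)"
    unfolding seq_means_def by (rule fold_inv[OF assms(1,2)])
  then show ?thesis by (rule final_refines[OF assms(1,2)])
qed

theorem mainTheorem10:
  fixes X :: "'a::euclidean_space set" and C :: "'a set set" and l :: nat
  assumes "finite X"
    and "is_clustering X C"
    and "convex_nice C"
    and "card C \<le> l" and "l \<le> card X"
  shows "measure_pmf.prob (pmf_of_set (permutations_of_set X))
           {xs. refines (induced_clustering (seq_means l xs) X) C}
         \<ge> 1 - real (card C) *
               exp (- (real (Min (card ` C)) / real (card X)) * real l)"
proof -
  define S where "S = permutations_of_set X"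
  define P where "P = pmf_of_set S"
  define n where "n = card X"
  define m where "m = Min (card ` C)"
  define bad where "bad A = {xs. set (take l xs) \<inter> A = {}}" for A :: "'a set"
  define U where "U = (\<Union>A\<in>C. bad A)"
  define G where "G = {xs. refines (induced_clustering (seq_means l xs) X) C}"
  define E where "E = exp (- (real m / real n) * real l)"
  have CX: "\<And>A. A \<in> C \<Longrightarrow> A \<subseteq> X" using assms(2) unfolding is_clustering_def by blast
  have fC: "finite C"
  proof (rule finite_subset)
    show "C \<subseteq> Pow X" using CX by blast
    show "finite (Pow X)" using assms(1) by simp
  qed
  have SN: "S \<noteq> {}" "finite S" unfolding S_def using assms(1) by simp_all
  have sub: "S - U \<subseteq> G"
  proof
    fix xs assume xs: "xs \<in> S - U"
    have "\<forall>A\<in>C. set (take l xs) \<inter> A \<noteq> {}" using xs unfolding U_def bad_def by blast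
    then show "xs \<in> G" unfolding G_def
      using deterministic[OF assms(3,2) _ assms(5)] xs unfolding S_def by blast
  qed
  have m1: "measure P S = 1" unfolding P_def using measure_pmf_of_set[OF SN, of S] SN by simp
  have d: "measure P (S - U) = measure P S - measure P (S \<inter> U)"
    by (rule measure_pmf.finite_measure_Diff') simp_all
  have mono1: "measure P (S \<inter> U) \<le> measure P U"
    by (rule measure_pmf.finite_measure_mono) simp_all
  have sa: "measure P U \<le> (\<Sum>A\<in>C. measure P (bad A))"
    unfolding U_def by (rule measure_pmf.finite_measure_subadditive_finite[OF fC]) simp
  have each: "measure P (bad A) \<le> E" if A: "A \<in> C" for A
  proof -
    define a where "a = card A"
    have AX: "A \<subseteq> X" using CX A by blast
    have an: "a \<le> n" unfolding a_def n_def using card_mono[OF assms(1) AX] .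
    have "measure P (bad A) = real (card (S \<inter> bad A)) / real (card S)"
      unfolding P_def using measure_pmf_of_set[OF SN] .
    also have "real (card S) = fact n" unfolding S_def n_def using assms(1) by simp
    also have "real (card (S \<inter> bad A)) / fact n \<le> (1 - real a / real n) ^ l"
    proof -
      have "real (card (S \<inter> bad A)) \<le> (1 - real a / real n) ^ l * fact n"
        unfolding S_def bad_def a_def n_def using card_bad[OF assms(1) AX assms(5)] .
      moreover have "(0::real) < fact n" by simp
      ultimately show ?thesis by (simp add: divide_le_eq)
    qed
    also have "\<dots> \<le> exp (- (real a / real n)) ^ l"
    proof (rule power_mono)
      have "real a / real n \<le> 1"
        using an by (cases "n = 0") (simp_all add: divide_le_eq)
      then show "0 \<le> 1 - real a / real n" by simp
      show "1 - real a / real n \<le> exp (- (real a / real n))"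
        using exp_ge_add_one_self[of "- (real a / real n)"] by simp
    qed
    also have "\<dots> = exp (- (real a / real n) * real l)"
      using exp_of_nat_mult[of l "- (real a / real n)"] by (simp add: mult.commute)
    also have "\<dots> \<le> E" unfolding E_def
    proof -
      have "m \<le> a" unfolding m_def a_def using fC A by (intro Min_le) auto
      then have "real m / real n \<le> real a / real n" by (intro divide_right_mono) auto
      then have "- (real a / real n) * real l \<le> - (real m / real n) * real l"
        by (intro mult_right_mono) auto
      then show "exp (- (real a / real n) * real l) \<le> exp (- (real m / real n) * real l)" by simp
    qed
    finally show ?thesis .
  qed
  have "(\<Sum>A\<in>C. measure P (bad A)) \<le> real (card C) * E"
    using sum_bounded_above[of C "\<lambda>A. measure P (bad A)" E] each by simp
  then have "1 - real (card C) * E \<le> measure P (S - U)" using d m1 mono1 sa by linarith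
  also have "\<dots> \<le> measure P G" by (rule measure_pmf.finite_measure_mono[OF sub]) simp
  finally show ?thesis unfolding P_def S_def G_def E_def m_def n_def .
qed

end
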